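(* Let $n\ge 2$, $\mathbf A\in\mathcal G_n$ and $x\in\mathcal G_n(\mathbf A,\mathbf C_n)$. For each $i\in\operatorname{ran}x\setminus\{0\}$ let $u_i\colon A\to\{0,1\}$ be defined by $u_i(a)=1$ if and only if $x(a)\ge i$. Then each $u_i$ lies in $\mathcal D(U(\mathbf A),\mathbf 2)$, and the assignment $i\mapsto u_i$ is a bijection from $\operatorname{ran}x\setminus\{0\}$ onto the set ${\uparrow}(\omega\circ x)$ of elements of the poset $\mathcal D(U(\mathbf A),\mathbf 2)$ lying above $\omega\circ x$. In particular $|{\uparrow}(\omega\circ x)|\le n-1$. Moreover, for $x,y\in\mathcal G_n(\mathbf A,\mathbf C_n)$: $\omega\circ y$ covers $\omega\circ x$ in $\mathcal D(U(\mathbf A),\mathbf 2)$ if and only if $x^{-1}(\top)\subseteq y^{-1}(\top)$ and $|\operatorname{ran}x|-1=|\operatorname{ran}y|$.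
   Context: Fix an integer $n\ge 2$. $\mathbf C_n$ is the Heyting algebra whose universe is the chain $\{0<1<\dots<n-1\}$, with lattice operations min and max, $\bot=0$, $\top=n-1$, and $a\to b=\top$ if $a\le b$, $a\to b=b$ if $b<a$. $\mathcal G_n$ denotes the class of algebras isomorphic to subalgebras of direct powers of $\mathbf C_n$ (the variety generated by $\mathbf C_n$). For $\mathbf A\in\mathcal G_n$, $\mathcal G_n(\mathbf A,\mathbf C_n)$ is the set of Heyting algebra homomorphisms $\mathbf A\to\mathbf C_n$, and $\operatorname{ran}x$ denotes the image of $x$. $U(\mathbf A)$ denotes the bounded distributive lattice reduct of $\mathbf A$; $\mathbf 2$ is the two-element bounded lattice $\{0<1\}$; $\mathcal D(U(\mathbf A),\mathbf 2)$ is the set of bounded-lattice homomorphisms $U(\mathbf A)\to\mathbf 2$, ordered pointwise, and ${\uparrow}u$ denotes the set of elements $\ge u$ in this poset. $\omega\colon U(\mathbf C_n)\to\mathbf 2$ is the lattice homomorphism with $\omega(\top)=1$ and $\omega(k)=0$ for $k<\top$. *)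

theory Defs
  imports "HOL-Library.FuncSet"
begin

record 'a halg =
  carrier :: "'a set"
  hmeet :: "'a \<Rightarrow> 'a \<Rightarrow> 'a"
  hjoin :: "'a \<Rightarrow> 'a \<Rightarrow> 'a"
  himp  :: "'a \<Rightarrow> 'a \<Rightarrow> 'a"
  hbot  :: 'a
  htop  :: 'a

definition closed_alg :: "'a halg \<Rightarrow> bool" where
  "closed_alg A \<longleftrightarrow> hbot A \<in> carrier A \<and> htop A \<in> carrier A \<and>
     (\<forall>a\<in>carrier A. \<forall>b\<in>carrier A.
        hmeet A a b \<in> carrier A \<and> hjoin A a b \<in> carrier A \<and> himp A a b \<in> carrier A)"

definition Cn :: "nat \<Rightarrow> nat halg" where
  "Cn n = \<lparr> carrier = {..<n}, hmeet = min, hjoin = max,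
            himp = (\<lambda>a b. if a \<le> b then n - 1 else b), hbot = 0, htop = n - 1 \<rparr>"

definition hhom :: "'a halg \<Rightarrow> 'b halg \<Rightarrow> ('a \<Rightarrow> 'b) set" where
  "hhom A B = {h. (\<forall>a\<in>carrier A. h a \<in> carrier B) \<and>
     (\<forall>a\<in>carrier A. \<forall>b\<in>carrier A.
        h (hmeet A a b) = hmeet B (h a) (h b) \<and>
        h (hjoin A a b) = hjoin B (h a) (h b) \<and>
        h (himp A a b) = himp B (h a) (h b)) \<and>
     h (hbot A) = hbot B \<and> h (htop A) = htop B}"

text \<open>A is (isomorphic to) a subalgebra of a direct power C_n^I, the index set I living in
  type 'i: there is an injective homomorphism e of A into C_n^I (operations pointwise on I).\<close>
definition in_Gn :: "'i itself \<Rightarrow> nat \<Rightarrow> 'a halg \<Rightarrow> bool" where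
  "in_Gn _ n A \<longleftrightarrow> closed_alg A \<and>
     (\<exists>(I::'i set) (e::'a \<Rightarrow> 'i \<Rightarrow> nat).
        (\<forall>i\<in>I. (\<lambda>a. e a i) \<in> hhom A (Cn n)) \<and>
        (\<forall>a\<in>carrier A. \<forall>b\<in>carrier A. (\<forall>i\<in>I. e a i = e b i) \<longrightarrow> a = b))"

text \<open>Bounded lattice homomorphisms U(A) \<rightarrow> 2 with 2 = {0<1}; functions are extensional
  on the carrier.\<close>
definition Dhom :: "'a halg \<Rightarrow> ('a \<Rightarrow> nat) set" where
  "Dhom A = {u \<in> carrier A \<rightarrow>\<^sub>E {0, 1}.
     (\<forall>a\<in>carrier A. \<forall>b\<in>carrier A.
        u (hmeet A a b) = min (u a) (u b) \<and> u (hjoin A a b) = max (u a) (u b)) \<and>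
     u (hbot A) = 0 \<and> u (htop A) = 1}"

definition dle :: "'a halg \<Rightarrow> ('a \<Rightarrow> nat) \<Rightarrow> ('a \<Rightarrow> nat) \<Rightarrow> bool" where
  "dle A u v \<longleftrightarrow> (\<forall>a\<in>carrier A. u a \<le> v a)"

definition upset :: "'a halg \<Rightarrow> ('a \<Rightarrow> nat) \<Rightarrow> ('a \<Rightarrow> nat) set" where
  "upset A w = {u \<in> Dhom A. dle A w u}"

definition covers :: "'a halg \<Rightarrow> ('a \<Rightarrow> nat) \<Rightarrow> ('a \<Rightarrow> nat) \<Rightarrow> bool" where
  "covers A v w \<longleftrightarrow> w \<in> Dhom A \<and> v \<in> Dhom A \<and> dle A w v \<and> w \<noteq> v \<and>
     \<not> (\<exists>u\<in>Dhom A. dle A w u \<and> dle A u v \<and> u \<noteq> w \<and> u \<noteq> v)"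

definition omega :: "nat \<Rightarrow> nat \<Rightarrow> nat" where
  "omega n k = (if k = n - 1 then 1 else 0)"

definition omega_comp :: "nat \<Rightarrow> 'a halg \<Rightarrow> ('a \<Rightarrow> nat) \<Rightarrow> ('a \<Rightarrow> nat)" where
  "omega_comp n A x = restrict (omega n \<circ> x) (carrier A)"

definition uvec :: "'a halg \<Rightarrow> ('a \<Rightarrow> nat) \<Rightarrow> nat \<Rightarrow> ('a \<Rightarrow> nat)" where
  "uvec A x i = restrict (\<lambda>a. if i \<le> x a then 1 else 0) (carrier A)"

end

theory Submission imports Defs begin

lemma Cn_simps[simp]: "carrier (Cn n) = {..<n}" "hmeet (Cn n) = min" "hjoin (Cn n) = max"
  "himp (Cn n) = (\<lambda>a b. if a \<le> b then n-1 else b)" "hbot (Cn n) = 0" "htop (Cn n) = n-1"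
  by (simp_all add: Cn_def)

lemma hhomD:
  assumes "x \<in> hhom A (Cn n)"
  shows "a \<in> carrier A \<Longrightarrow> x a < n"
    and "a \<in> carrier A \<Longrightarrow> b \<in> carrier A \<Longrightarrow> x (hmeet A a b) = min (x a) (x b)"
    and "a \<in> carrier A \<Longrightarrow> b \<in> carrier A \<Longrightarrow> x (hjoin A a b) = max (x a) (x b)"
    and "a \<in> carrier A \<Longrightarrow> b \<in> carrier A \<Longrightarrow> x (himp A a b) = (if x a \<le> x b then n-1 else x b)"
    and "x (hbot A) = 0" and "x (htop A) = n - 1"
  using assms unfolding hhom_def by auto

lemma closedD:
  assumes "closed_alg A"
  shows "hbot A \<in> carrier A" "htop A \<in> carrier A"
    "a \<in> carrier A \<Longrightarrow> b \<in> carrier A \<Longrightarrow> hmeet A a b \<in> carrier A"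
    "a \<in> carrier A \<Longrightarrow> b \<in> carrier A \<Longrightarrow> hjoin A a b \<in> carrier A"
    "a \<in> carrier A \<Longrightarrow> b \<in> carrier A \<Longrightarrow> himp A a b \<in> carrier A"
  using assms unfolding closed_alg_def by auto

lemma mp_identity:
  assumes "in_Gn TYPE('i) n A" "a \<in> carrier A" "b \<in> carrier A"
  shows "hjoin A (hmeet A a (himp A a b)) b = b"
proof -
  have cl: "closed_alg A" using assms(1) unfolding in_Gn_def by auto
  from assms(1) obtain I :: "'i set" and e where hom: "\<forall>i\<in>I. (\<lambda>a. e a i) \<in> hhom A (Cn n)"
    and inj: "\<forall>a\<in>carrier A. \<forall>b\<in>carrier A. (\<forall>i\<in>I. e a i = e b i) \<longrightarrow> a = b"
    unfolding in_Gn_def by blast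
  have c1: "himp A a b \<in> carrier A" "hmeet A a (himp A a b) \<in> carrier A"
    "hjoin A (hmeet A a (himp A a b)) b \<in> carrier A"
    using closedD[OF cl] assms by auto
  show ?thesis
  proof (rule inj[rule_format])
    show "hjoin A (hmeet A a (himp A a b)) b \<in> carrier A" by fact
    show "b \<in> carrier A" by fact
    fix i assume "i \<in> I"
    hence h: "(\<lambda>a. e a i) \<in> hhom A (Cn n)" using hom by auto
    have "e a i < n" using hhomD(1)[OF h] assms by auto
    thus "e (hjoin A (hmeet A a (himp A a b)) b) i = e b i"
      using hhomD(2,3,4)[OF h] assms c1 by auto
  qed
qed

lemma card_same_kernel:
  assumes "\<forall>a\<in>S. \<forall>b\<in>S. f a = f b \<longleftrightarrow> g a = g b"
  shows "card (f ` S) = card (g ` S)"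
proof -
  define h where "h = (\<lambda>k. g (inv_into S f k))"
  have hf: "h (f a) = g a" if "a \<in> S" for a
  proof -
    have "inv_into S f (f a) \<in> S" "f (inv_into S f (f a)) = f a"
      using that by (auto intro: inv_into_into f_inv_into_f)
    thus ?thesis unfolding h_def using assms that by blast
  qed
  have "g ` S = h ` (f ` S)"
    using hf by (simp add: image_image)
  moreover have "inj_on h (f ` S)"
  proof (rule inj_onI)
    fix p q assume "p \<in> f ` S" "q \<in> f ` S" "h p = h q"
    then obtain a b where "a \<in> S" "b \<in> S" "p = f a" "q = f b" "g a = g b"
      using hf by auto
    thus "p = q" using assms by blast
  qed
  ultimately show ?thesis by (simp add: card_image)
qed

lemma uvec_Dhom:
  assumes "z \<in> hhom A (Cn n)" "closed_alg A" "i \<in> z ` carrier A" "i \<noteq> 0"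
  shows "uvec A z i \<in> Dhom A"
proof -
  have "i < n" using assms(3) hhomD(1)[OF assms(1)] by auto
  hence "i \<le> n - 1" by simp
  moreover have "uvec A z i \<in> carrier A \<rightarrow>\<^sub>E {0, 1}"
    unfolding uvec_def by (simp add: restrict_PiE_iff)
  moreover have "\<forall>a\<in>carrier A. \<forall>b\<in>carrier A.
        uvec A z i (hmeet A a b) = min (uvec A z i a) (uvec A z i b) \<and>
        uvec A z i (hjoin A a b) = max (uvec A z i a) (uvec A z i b)"
    unfolding uvec_def using hhomD(2,3)[OF assms(1)] closedD(3,4)[OF assms(2)]
    by (simp add: le_max_iff_disj)
  moreover have "uvec A z i (hbot A) = 0" "uvec A z i (htop A) = 1"
    unfolding uvec_def using hhomD(5,6)[OF assms(1)] closedD(1,2)[OF assms(2)] assms(4) \<open>i \<le> n - 1\<close>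
    by auto
  ultimately show ?thesis
    unfolding Dhom_def by blast
qed

lemma omega_uvec:
  assumes "z \<in> hhom A (Cn n)"
  shows "omega_comp n A z = uvec A z (n-1)"
  unfolding omega_comp_def uvec_def
proof (rule restrict_ext)
  fix a assume "a \<in> carrier A"
  hence "z a < n" using hhomD(1)[OF assms] by auto
  thus "(omega n \<circ> z) a = (if n - 1 \<le> z a then 1 else 0)"
    unfolding omega_def by auto
qed


lemma DhomD:
  assumes "u \<in> Dhom A"
  shows "a \<in> carrier A \<Longrightarrow> u a = 0 \<or> u a = 1"
    and "a \<notin> carrier A \<Longrightarrow> u a = undefined"
    and "a \<in> carrier A \<Longrightarrow> b \<in> carrier A \<Longrightarrow> u (hmeet A a b) = min (u a) (u b)"
    and "a \<in> carrier A \<Longrightarrow> b \<in> carrier A \<Longrightarrow> u (hjoin A a b) = max (u a) (u b)"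
    and "u (hbot A) = 0" and "u (htop A) = 1"
  using assms unfolding Dhom_def by (auto simp: PiE_def extensional_def)

lemma up_closed:
  assumes G: "in_Gn TYPE('i) n A" and x: "x \<in> hhom A (Cn n)" and u: "u \<in> Dhom A"
    and ut: "\<forall>a\<in>carrier A. x a = n - 1 \<longrightarrow> u a = 1"
    and a: "a \<in> carrier A" and b: "b \<in> carrier A" and ua: "u a = 1" and le: "x a \<le> x b"
  shows "u b = 1"
proof -
  have cl: "closed_alg A" using G unfolding in_Gn_def by auto
  have c: "himp A a b \<in> carrier A" "hmeet A a (himp A a b) \<in> carrier A"
    using closedD[OF cl] a b by auto
  have "u (himp A a b) = 1" using ut c hhomD(4)[OF x a b] le by auto
  hence "u (hjoin A (hmeet A a (himp A a b)) b) = max 1 (u b)"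
    using DhomD(3,4)[OF u] c a b ua by simp
  hence "u b = max 1 (u b)" using mp_identity[OF G a b] by simp
  thus ?thesis using DhomD(1)[OF u b] by auto
qed

lemma upset_uvec:
  assumes G: "in_Gn TYPE('i) n A" and x: "x \<in> hhom A (Cn n)"
    and u: "u \<in> upset A (omega_comp n A x)"
  shows "\<exists>i\<in>x ` carrier A - {0}. u = uvec A x i"
proof -
  have cl: "closed_alg A" using G unfolding in_Gn_def by auto
  have uD: "u \<in> Dhom A" using u unfolding upset_def by auto
  have ut: "\<forall>a\<in>carrier A. x a = n - 1 \<longrightarrow> u a = 1"
  proof (intro ballI impI)
    fix a assume a: "a \<in> carrier A" "x a = n - 1"
    have "omega_comp n A x a \<le> u a" using u a unfolding upset_def dle_def by auto
    hence "1 \<le> u a" using a unfolding omega_comp_def omega_def by simp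
    thus "u a = 1" using DhomD(1)[OF uD a(1)] by auto
  qed
  note up = up_closed[OF G x uD ut]
  define S where "S = x ` {a \<in> carrier A. u a = 1}"
  have "htop A \<in> {a \<in> carrier A. u a = 1}" using closedD[OF cl] DhomD(6)[OF uD] by auto
  hence Sne: "S \<noteq> {}" unfolding S_def by auto
  have Sfin: "finite S"
  proof (rule finite_subset)
    show "S \<subseteq> {..<n}" unfolding S_def using hhomD(1)[OF x] by auto
  qed auto
  define i where "i = Min S"
  have "i \<in> S" unfolding i_def using Sne Sfin by simp
  then obtain a0 where a0: "a0 \<in> carrier A" "u a0 = 1" "x a0 = i" unfolding S_def by auto
  have i0: "i \<noteq> 0"
  proof
    assume "i = 0"
    hence "u (hbot A) = 1" using up[OF a0(1) closedD(1)[OF cl] a0(2)] a0(3) by simp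
    thus False using DhomD(5)[OF uD] by simp
  qed
  have "u = uvec A x i"
  proof
    fix a
    show "u a = uvec A x i a"
    proof (cases "a \<in> carrier A")
      case False
      thus ?thesis using DhomD(2)[OF uD] unfolding uvec_def by simp
    next
      case True
      note aC = True
      show ?thesis
      proof (cases "i \<le> x a")
        case True
        have "u a = 1" using up[OF a0(1) aC a0(2)] a0(3) True by simp
        thus ?thesis using True aC unfolding uvec_def by simp
      next
        case False
        have "u a \<noteq> 1"
        proof
          assume "u a = 1"
          hence "x a \<in> S" unfolding S_def using aC by auto
          hence "i \<le> x a" unfolding i_def using Sfin by simp
          thus False using False by simp
        qed
        hence "u a = 0" using DhomD(1)[OF uD aC] by auto
        thus ?thesis using False aC unfolding uvec_def by simp
      qed
    qed
  qed
  moreover have "i \<in> x ` carrier A" using a0(1) a0(3) by (metis image_eqI)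
  ultimately show ?thesis using i0 by (intro bexI[of _ i]) simp_all
qed

lemma dle_uvec:
  assumes x: "x \<in> hhom A (Cn n)" and i: "i \<in> x ` carrier A" and j: "j \<in> x ` carrier A"
  shows "dle A (uvec A x j) (uvec A x i) \<longleftrightarrow> i \<le> j"
proof
  assume d: "dle A (uvec A x j) (uvec A x i)"
  obtain a where a: "a \<in> carrier A" "x a = j" using j by auto
  have "uvec A x j a \<le> uvec A x i a" using d a unfolding dle_def by auto
  thus "i \<le> j" using a by (simp add: uvec_def split: if_splits)
next
  assume "i \<le> j"
  thus "dle A (uvec A x j) (uvec A x i)" unfolding dle_def uvec_def by auto
qed

lemma uvec_upset:
  assumes x: "x \<in> hhom A (Cn n)" and cl: "closed_alg A" and i: "i \<in> x ` carrier A - {0}"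
  shows "uvec A x i \<in> upset A (omega_comp n A x)"
proof -
  have "i < n" using i hhomD(1)[OF x] by auto
  hence "dle A (uvec A x (n-1)) (uvec A x i)" unfolding dle_def uvec_def by auto
  thus ?thesis unfolding upset_def omega_uvec[OF x] using uvec_Dhom[OF x cl] i by auto
qed


lemma kernel_y:
  assumes x: "x \<in> hhom A (Cn n)" and y: "y \<in> hhom A (Cn n)" and cl: "closed_alg A"
    and a: "a \<in> carrier A" and b: "b \<in> carrier A" and i: "i < n"
    and Fy: "\<forall>c\<in>carrier A. y c = n - 1 \<longleftrightarrow> i \<le> x c"
  shows "y a = y b \<longleftrightarrow> x a = x b \<or> (i \<le> x a \<and> i \<le> x b)"
proof -
  have ya: "y a < n" "y b < n" "x a < n" "x b < n" using hhomD(1)[OF y] hhomD(1)[OF x] a b by auto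
  have c: "himp A a b \<in> carrier A" "himp A b a \<in> carrier A" using closedD(5)[OF cl] a b by auto
  have "y a = y b \<longleftrightarrow> y (himp A a b) = n - 1 \<and> y (himp A b a) = n - 1"
    using hhomD(4)[OF y a b] hhomD(4)[OF y b a] ya by auto
  also have "\<dots> \<longleftrightarrow> i \<le> x (himp A a b) \<and> i \<le> x (himp A b a)" using Fy c by simp
  also have "\<dots> \<longleftrightarrow> x a = x b \<or> (i \<le> x a \<and> i \<le> x b)"
    using hhomD(4)[OF x a b] hhomD(4)[OF x b a] ya i by auto
  finally show ?thesis .
qed


theorem lemma2p1:
  fixes n :: nat and A :: "'a halg" and x :: "'a \<Rightarrow> nat"
  assumes "n \<ge> 2"
    and "in_Gn TYPE('i) n A"
    and "x \<in> hhom A (Cn n)"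
  shows "(\<forall>i \<in> x ` carrier A - {0}. uvec A x i \<in> Dhom A)
       \<and> bij_betw (uvec A x) (x ` carrier A - {0}) (upset A (omega_comp n A x))
       \<and> card (upset A (omega_comp n A x)) \<le> n - 1
       \<and> (\<forall>y \<in> hhom A (Cn n).
            covers A (omega_comp n A y) (omega_comp n A x) \<longleftrightarrow>
              ({a \<in> carrier A. x a = n - 1} \<subseteq> {a \<in> carrier A. y a = n - 1}
               \<and> card (x ` carrier A) - 1 = card (y ` carrier A)))"
proof -
  have cl: "closed_alg A" using assms(2) unfolding in_Gn_def by auto
  note x = assms(3)
  define R where "R = x ` carrier A"
  define R0 where "R0 = R - {0}"
  define U where "U = upset A (omega_comp n A x)"
  have xlt: "\<And>a. a \<in> carrier A \<Longrightarrow> x a < n" using hhomD(1)[OF x] by blast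
  have Rn: "R \<subseteq> {..<n}" unfolding R_def using xlt by auto
  have finR: "finite R" using Rn finite_subset by blast
  have topR: "n - 1 \<in> R" unfolding R_def using closedD(2)[OF cl] hhomD(6)[OF x] by (metis image_eqI)
  have topR0: "n - 1 \<in> R0" using topR assms(1) unfolding R0_def by auto
  have F1: "\<And>u. u \<in> U \<Longrightarrow> \<exists>i\<in>R0. u = uvec A x i"
    using upset_uvec[OF assms(2) x] unfolding U_def R0_def R_def by blast
  have F2: "\<And>i. i \<in> R0 \<Longrightarrow> uvec A x i \<in> U"
    using uvec_upset[OF x cl] unfolding U_def R0_def R_def by blast
  have F3: "\<And>i j. i \<in> R0 \<Longrightarrow> j \<in> R0 \<Longrightarrow> dle A (uvec A x j) (uvec A x i) \<longleftrightarrow> i \<le> j"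
    using dle_uvec[OF x] unfolding R0_def R_def by blast
  have dle_refl: "\<And>u. dle A u u" unfolding dle_def by simp
  have inj: "inj_on (uvec A x) R0"
  proof (rule inj_onI)
    fix i j assume ij: "i \<in> R0" "j \<in> R0" "uvec A x i = uvec A x j"
    have "i \<le> j" using F3[OF ij(1) ij(2)] ij(3) dle_refl by metis
    moreover have "j \<le> i" using F3[OF ij(2) ij(1)] ij(3) dle_refl by metis
    ultimately show "i = j" by simp
  qed
  have imgU: "uvec A x ` R0 = U" using F1 F2 by blast
  have bij: "bij_betw (uvec A x) R0 U" using inj imgU by (simp add: bij_betw_def)
  have cardU: "card U \<le> n - 1"
  proof -
    have "card U = card R0" using bij_betw_same_card[OF bij] by simp
    also have "\<dots> \<le> card ({..<n} - {0})" using Rn unfolding R0_def by (intro card_mono) auto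
    also have "\<dots> = n - 1" using assms(1) by simp
    finally show ?thesis .
  qed
  have part1: "\<forall>i \<in> x ` carrier A - {0}. uvec A x i \<in> Dhom A"
    using F2 unfolding U_def upset_def R0_def R_def by blast
  have Ox: "omega_comp n A x = uvec A x (n-1)" by (rule omega_uvec[OF x])
  have OxD: "omega_comp n A x \<in> Dhom A" using F2[OF topR0] Ox unfolding U_def upset_def by simp
  have part4: "\<forall>y \<in> hhom A (Cn n).
            covers A (omega_comp n A y) (omega_comp n A x) \<longleftrightarrow>
              ({a \<in> carrier A. x a = n - 1} \<subseteq> {a \<in> carrier A. y a = n - 1}
               \<and> card (x ` carrier A) - 1 = card (y ` carrier A))"
  proof
    fix y assume y: "y \<in> hhom A (Cn n)"
    have ylt: "\<And>a. a \<in> carrier A \<Longrightarrow> y a < n" using hhomD(1)[OF y] by blast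
    have Oy: "omega_comp n A y = uvec A y (n-1)" by (rule omega_uvec[OF y])
    have topy: "n - 1 \<in> y ` carrier A" using closedD(2)[OF cl] hhomD(6)[OF y] by (metis image_eqI)
    have OyD: "omega_comp n A y \<in> Dhom A"
      unfolding Oy using uvec_Dhom[OF y cl topy] assms(1) by simp
    have dleiff: "dle A (omega_comp n A x) (omega_comp n A y) \<longleftrightarrow>
        {a \<in> carrier A. x a = n - 1} \<subseteq> {a \<in> carrier A. y a = n - 1}"
    proof
      assume d: "dle A (omega_comp n A x) (omega_comp n A y)"
      show "{a \<in> carrier A. x a = n - 1} \<subseteq> {a \<in> carrier A. y a = n - 1}"
      proof
        fix a assume a: "a \<in> {a \<in> carrier A. x a = n - 1}"
        hence "omega_comp n A x a \<le> omega_comp n A y a" using d unfolding dle_def by auto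
        thus "a \<in> {a \<in> carrier A. y a = n - 1}" using a
          unfolding omega_comp_def omega_def by (auto split: if_splits)
      qed
    next
      assume "{a \<in> carrier A. x a = n - 1} \<subseteq> {a \<in> carrier A. y a = n - 1}"
      thus "dle A (omega_comp n A x) (omega_comp n A y)"
        unfolding dle_def omega_comp_def omega_def by auto
    qed
    show "covers A (omega_comp n A y) (omega_comp n A x) \<longleftrightarrow>
              ({a \<in> carrier A. x a = n - 1} \<subseteq> {a \<in> carrier A. y a = n - 1}
               \<and> card (x ` carrier A) - 1 = card (y ` carrier A))"
    proof (cases "{a \<in> carrier A. x a = n - 1} \<subseteq> {a \<in> carrier A. y a = n - 1}")
      case False
      thus ?thesis using dleiff unfolding covers_def by simp
    next
      case True
      hence "omega_comp n A y \<in> U" unfolding U_def upset_def using OyD dleiff by simp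
      then obtain i where i: "i \<in> R0" "omega_comp n A y = uvec A x i" using F1 by blast
      have iR: "i \<in> R" "i \<noteq> 0" using i unfolding R0_def by auto
      have ilt: "i \<le> n - 1" using iR Rn by auto
      have Fy: "\<forall>c\<in>carrier A. y c = n - 1 \<longleftrightarrow> i \<le> x c"
      proof
        fix c assume c: "c \<in> carrier A"
        have e: "omega_comp n A y c = uvec A x i c" by (rule fun_cong[OF i(2)])
        have l: "omega_comp n A y c = (if y c = n - 1 then 1 else 0)"
          using c unfolding omega_comp_def omega_def by simp
        have r: "uvec A x i c = (if i \<le> x c then 1 else 0)"
          using c unfolding uvec_def by simp
        show "y c = n - 1 \<longleftrightarrow> i \<le> x c"
          using e unfolding l r by (cases "y c = n - 1"; cases "i \<le> x c") simp_all
      qed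
      have cov: "covers A (omega_comp n A y) (omega_comp n A x) \<longleftrightarrow>
          i \<noteq> n - 1 \<and> \<not> (\<exists>j\<in>R. i < j \<and> j < n - 1)"
      proof -
        have ne: "omega_comp n A x \<noteq> omega_comp n A y \<longleftrightarrow> i \<noteq> n - 1"
          unfolding Ox i(2) using inj_on_eq_iff[OF inj topR0 i(1)] by auto
        have btw: "(\<exists>u\<in>Dhom A. dle A (omega_comp n A x) u \<and> dle A u (omega_comp n A y)
              \<and> u \<noteq> omega_comp n A x \<and> u \<noteq> omega_comp n A y) \<longleftrightarrow> (\<exists>j\<in>R. i < j \<and> j < n - 1)"
        proof
          assume "\<exists>u\<in>Dhom A. dle A (omega_comp n A x) u \<and> dle A u (omega_comp n A y)
              \<and> u \<noteq> omega_comp n A x \<and> u \<noteq> omega_comp n A y"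
          then obtain u where u: "u \<in> Dhom A" "dle A (omega_comp n A x) u"
            "dle A u (omega_comp n A y)" "u \<noteq> omega_comp n A x" "u \<noteq> omega_comp n A y" by blast
          have "u \<in> U" using u unfolding U_def upset_def by simp
          then obtain j where j: "j \<in> R0" "u = uvec A x j" using F1 by blast
          have "i \<le> j" using u(3) F3[OF i(1) j(1)] i(2) j(2) by simp
          moreover have "j \<noteq> i" using u(5) i(2) j(2) by auto
          moreover have "j \<noteq> n - 1" using u(4) Ox j(2) by auto
          moreover have "j \<le> n - 1" using j(1) Rn unfolding R0_def by auto
          ultimately have "i < j \<and> j < n - 1" by linarith
          moreover have "j \<in> R" using j(1) unfolding R0_def by simp
          ultimately show "\<exists>j\<in>R. i < j \<and> j < n - 1" by blast
        next
          assume "\<exists>j\<in>R. i < j \<and> j < n - 1"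
          then obtain j where j: "j \<in> R" "i < j" "j < n - 1" by blast
          have jR0: "j \<in> R0" using j unfolding R0_def by auto
          show "\<exists>u\<in>Dhom A. dle A (omega_comp n A x) u \<and> dle A u (omega_comp n A y)
              \<and> u \<noteq> omega_comp n A x \<and> u \<noteq> omega_comp n A y"
          proof (intro bexI[of _ "uvec A x j"] conjI)
            show "uvec A x j \<in> Dhom A" using F2[OF jR0] unfolding U_def upset_def by simp
            show "dle A (omega_comp n A x) (uvec A x j)" unfolding Ox using F3[OF jR0 topR0] j by simp
            show "dle A (uvec A x j) (omega_comp n A y)" unfolding i(2) using F3[OF i(1) jR0] j by simp
            show "uvec A x j \<noteq> omega_comp n A x" unfolding Ox using inj_on_eq_iff[OF inj jR0 topR0] j by simp
            show "uvec A x j \<noteq> omega_comp n A y" unfolding i(2) using inj_on_eq_iff[OF inj jR0 i(1)] j by simp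
          qed
        qed
        have dl: "dle A (omega_comp n A x) (omega_comp n A y)" using dleiff True by simp
        have c1: "covers A (omega_comp n A y) (omega_comp n A x) \<longleftrightarrow>
          (omega_comp n A x \<noteq> omega_comp n A y \<and> \<not> (\<exists>u\<in>Dhom A. dle A (omega_comp n A x) u \<and> dle A u (omega_comp n A y)
              \<and> u \<noteq> omega_comp n A x \<and> u \<noteq> omega_comp n A y))"
          unfolding covers_def using OxD OyD dl by (simp only: simp_thms)
        show ?thesis unfolding c1 ne btw ..
      qed
      define L where "L = {a \<in> carrier A. x a < i}"
      define H where "H = {a \<in> carrier A. i \<le> x a}"
      define T where "T = x ` H"
      have carrLH: "carrier A = L \<union> H" unfolding L_def H_def by auto
      have Rsplit: "R = x ` L \<union> T" unfolding R_def T_def by (subst carrLH) (simp add: image_Un)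
      have disj: "x ` L \<inter> T = {}" unfolding T_def L_def H_def by auto
      have finL: "finite (x ` L)" "finite T" using finR Rsplit by auto
      have cardR: "card R = card (x ` L) + card T" using Rsplit disj finL card_Un_disjoint by metis
      have topH: "htop A \<in> H" unfolding H_def using closedD(2)[OF cl] hhomD(6)[OF x] ilt by simp
      have yH: "y ` H = {n - 1}"
      proof
        show "y ` H \<subseteq> {n - 1}" using Fy unfolding H_def by auto
        show "{n - 1} \<subseteq> y ` H" using topH hhomD(6)[OF y] by (metis empty_subsetI image_eqI insert_subset)
      qed
      have yL: "n - 1 \<notin> y ` L" using Fy unfolding L_def by auto
      have ker: "card (y ` L) = card (x ` L)"
      proof (rule card_same_kernel, intro ballI)
        fix a b assume "a \<in> L" "b \<in> L"
        thus "y a = y b \<longleftrightarrow> x a = x b"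
          using kernel_y[OF x y cl _ _ _ Fy, of a b] ilt assms(1) unfolding L_def by auto
      qed
      have Ry: "y ` carrier A = y ` L \<union> {n - 1}" using yH by (subst carrLH) (simp add: image_Un)
      have finyL: "finite (y ` L)"
        by (rule finite_subset[of _ "{..<n}"]) (use ylt in \<open>auto simp: L_def\<close>)
      have cardRy: "card (y ` carrier A) = card (x ` L) + 1" using Ry yL finyL ker by simp
      have Tsub: "T = {k \<in> R. i \<le> k}" unfolding T_def H_def R_def by auto
      have iT: "i \<in> T" using Tsub iR by simp
      have cardT: "card T = 2 \<longleftrightarrow> i \<noteq> n - 1 \<and> \<not> (\<exists>j\<in>R. i < j \<and> j < n - 1)"
      proof (cases "i = n - 1")
        case True
        then have "T = {n - 1}" using Tsub Rn topR by auto
        thus ?thesis using True by simp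
      next
        case False
        note ne1 = False
        show ?thesis
        proof (cases "\<exists>j\<in>R. i < j \<and> j < n - 1")
          case True
          then obtain j where j: "j \<in> R" "i < j" "j < n - 1" by blast
          hence "{i, j, n - 1} \<subseteq> T" using Tsub iR topR ilt by auto
          hence "card {i, j, n - 1} \<le> card T" using finL(2) card_mono by blast
          moreover have "card {i, j, n - 1} = 3" using j by simp
          ultimately show ?thesis using True by simp
        next
          case False
          have "T = {i, n - 1}"
          proof
            show "T \<subseteq> {i, n - 1}"
            proof
              fix k assume "k \<in> T"
              hence k: "k \<in> R" "i \<le> k" using Tsub by auto
              hence "k < n" using Rn by auto
              thus "k \<in> {i, n - 1}" using k False by force
            qed
            show "{i, n - 1} \<subseteq> T" using Tsub iR topR ilt by auto
          qed
          thus ?thesis using ne1 False by simp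
        qed
      qed
      have T1: "card T \<ge> 1" using iT finL(2) by (metis One_nat_def Suc_leI card_gt_0_iff empty_iff)
      have "card (x ` carrier A) - 1 = card (y ` carrier A) \<longleftrightarrow> card T = 2"
        using cardR cardRy T1 unfolding R_def by auto
      thus ?thesis using cov cardT True by simp
    qed
  qed
  have bij': "bij_betw (uvec A x) (x ` carrier A - {0}) (upset A (omega_comp n A x))"
    using bij unfolding U_def R0_def R_def .
  have cardU': "card (upset A (omega_comp n A x)) \<le> n - 1" using cardU unfolding U_def .
  show ?thesis using part1 bij' cardU' part4 by (intro conjI)
qed

end
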